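(* Let $\mathbb{F}$ be an algebraically closed field with $\mathrm{char}\,\mathbb{F}=2$. Let $\underline{a}=(a_1,0,\ldots,0)\in\mathbb{M}^n$ with $a_1\in\{1_{\mathbf{O}},e_1\}$, and let $\underline{b}\in\mathbb{M}^n$ be such that $\dim\mathrm{alg}(\underline{b})\le1$ and $f(\underline{a})=f(\underline{b})$ for all $f\in S_n^{(2)}$. Then ${\rm G}_2\underline{a}={\rm G}_2\underline{b}$.
   Context: The split octonion algebra $\mathbf{O}$ is the 8-dimensional $\mathbb{F}$-vector space of formal matrices $a=\begin{pmatrix}\alpha&\mathbf{u}\\ \mathbf{v}&\beta\end{pmatrix}$ with $\alpha,\beta\in\mathbb{F}$, $\mathbf{u},\mathbf{v}\in\mathbb{F}^3$, with multiplication $\begin{pmatrix}\alpha&\mathbf{u}\\ \mathbf{v}&\beta\end{pmatrix}\begin{pmatrix}\alpha'&\mathbf{u}'\\ \mathbf{v}'&\beta'\end{pmatrix}=\begin{pmatrix}\alpha\alpha'+\mathbf{u}\cdot\mathbf{v}'&\alpha\mathbf{u}'+\beta'\mathbf{u}-\mathbf{v}\times\mathbf{v}'\\ \alpha'\mathbf{v}+\beta\mathbf{v}'+\mathbf{u}\times\mathbf{u}'&\beta\beta'+\mathbf{v}\cdot\mathbf{u}'\end{pmatrix}$ (dot product and cross product on $\mathbb{F}^3$). Trace $\mathrm{tr}(a)=\alpha+\beta$, norm $n(a)=\alpha\beta-\mathbf{u}\cdot\mathbf{v}$. $e_1$ has $\alpha=1$ and all else $0$, $e_2$ has $\beta=1$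 and all else $0$, $1_{\mathbf{O}}=e_1+e_2$. $\mathbb{M}=\left\{\begin{pmatrix}\alpha&(\gamma,0,0)\\(\delta,0,0)&\beta\end{pmatrix}\right\}\subseteq\mathbf{O}$ is the quaternion subalgebra. ${\rm G}_2=\mathrm{Aut}(\mathbf{O})$ acts diagonally on $\mathbf{O}^n$. For $\underline{b}\in\mathbf{O}^n$, $\mathrm{alg}(\underline{b})$ is the (non-unital) $\mathbb{F}$-subalgebra of $\mathbf{O}$ generated by $b_1,\ldots,b_n$. $S_n^{(2)}$ is the set of functions on $\mathbf{O}^n$: $\underline{a}\mapsto n(a_i)$, $\underline{a}\mapsto\mathrm{tr}(a_i)$ ($1\le i\le n$), and $\underline{a}\mapsto\mathrm{tr}(a_ia_j)$ ($1\le i<j\le n$). *)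

theory Defs
  imports Main "HOL-Computational_Algebra.Polynomial"
begin

text \<open>An element (alpha, u, v, beta) represents the formal matrix
  [[alpha, u], [v, beta]] with alpha, beta scalars and u, v in F^3.\<close>

datatype 'a oct = Oct 'a "'a \<times> 'a \<times> 'a" "'a \<times> 'a \<times> 'a" 'a

type_synonym 'a vec3 = "'a \<times> 'a \<times> 'a"

definition dot3 :: "'a::comm_ring_1 vec3 \<Rightarrow> 'a vec3 \<Rightarrow> 'a" where
  "dot3 u w = (case u of (u1,u2,u3) \<Rightarrow> case w of (w1,w2,w3) \<Rightarrow> u1*w1 + u2*w2 + u3*w3)"

definition cross3 :: "'a::comm_ring_1 vec3 \<Rightarrow> 'a vec3 \<Rightarrow> 'a vec3" where
  "cross3 u w = (case u of (u1,u2,u3) \<Rightarrow> case w of (w1,w2,w3) \<Rightarrow>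
     (u2*w3 - u3*w2, u3*w1 - u1*w3, u1*w2 - u2*w1))"

definition sc3 :: "'a::comm_ring_1 \<Rightarrow> 'a vec3 \<Rightarrow> 'a vec3" where
  "sc3 c u = (case u of (u1,u2,u3) \<Rightarrow> (c*u1, c*u2, c*u3))"

definition add3 :: "'a::comm_ring_1 vec3 \<Rightarrow> 'a vec3 \<Rightarrow> 'a vec3" where
  "add3 u w = (case u of (u1,u2,u3) \<Rightarrow> case w of (w1,w2,w3) \<Rightarrow> (u1+w1, u2+w2, u3+w3))"

instantiation oct :: (ab_group_add) ab_group_add
begin
fun plus_oct :: "'a oct \<Rightarrow> 'a oct \<Rightarrow> 'a oct" where
  "plus_oct (Oct a (u1,u2,u3) (v1,v2,v3) b) (Oct a' (u1',u2',u3') (v1',v2',v3') b') =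
     Oct (a+a') (u1+u1',u2+u2',u3+u3') (v1+v1',v2+v2',v3+v3') (b+b')"
fun uminus_oct :: "'a oct \<Rightarrow> 'a oct" where
  "uminus_oct (Oct a (u1,u2,u3) (v1,v2,v3) b) = Oct (-a) (-u1,-u2,-u3) (-v1,-v2,-v3) (-b)"
definition zero_oct :: "'a oct" where "zero_oct = Oct 0 (0,0,0) (0,0,0) 0"
definition minus_oct :: "'a oct \<Rightarrow> 'a oct \<Rightarrow> 'a oct" where "minus_oct x y = x + (- y)"
instance
proof
  fix x y z :: "'a oct"
  show "x + y + z = x + (y + z)"
    by (cases x; cases y; cases z) (auto simp: algebra_simps)
  show "x + y = y + x"
    by (cases x; cases y) (auto simp: algebra_simps)
  show "0 + x = x"
    by (cases x) (auto simp: zero_oct_def)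
  show "- x + x = 0"
    by (cases x) (auto simp: zero_oct_def)
  show "x - y = x + - y" by (simp add: minus_oct_def)
qed
end

instantiation oct :: (comm_ring_1) times
begin
fun times_oct :: "'a oct \<Rightarrow> 'a oct \<Rightarrow> 'a oct" where
  "times_oct (Oct a u v b) (Oct a' u' v' b') =
     Oct (a*a' + dot3 u v')
         (add3 (add3 (sc3 a u') (sc3 b' u)) (sc3 (-1) (cross3 v v')))
         (add3 (add3 (sc3 a' v) (sc3 b v')) (cross3 u u'))
         (b*b' + dot3 v u')"
instance ..
end

fun osc :: "'a::comm_ring_1 \<Rightarrow> 'a oct \<Rightarrow> 'a oct" where
  "osc c (Oct a u v b) = Oct (c*a) (sc3 c u) (sc3 c v) (c*b)"

fun otr :: "'a::comm_ring_1 oct \<Rightarrow> 'a" where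
  "otr (Oct a u v b) = a + b"

fun onorm :: "'a::comm_ring_1 oct \<Rightarrow> 'a" where
  "onorm (Oct a u v b) = a*b - dot3 u v"

definition e1 :: "'a::comm_ring_1 oct" where "e1 = Oct 1 (0,0,0) (0,0,0) 0"
definition e2 :: "'a::comm_ring_1 oct" where "e2 = Oct 0 (0,0,0) (0,0,0) 1"
definition one_O :: "'a::comm_ring_1 oct" where "one_O = e1 + e2"

definition quatM :: "'a::comm_ring_1 oct set" where
  "quatM = {Oct a (c,0,0) (d,0,0) b | a b c d. True}"

definition is_G2 :: "('a::comm_ring_1 oct \<Rightarrow> 'a oct) \<Rightarrow> bool" where
  "is_G2 g \<longleftrightarrow> bij g \<and> (\<forall>x y. g (x + y) = g x + g y) \<and> (\<forall>c x. g (osc c x) = osc c (g x))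
     \<and> (\<forall>x y. g (x * y) = g x * g y)"

text \<open>Equality of G_2-orbits of n-tuples (tuples indexed by 0..n-1): same orbit iff
  some automorphism maps one tuple to the other componentwise.\<close>
definition same_G2_orbit :: "nat \<Rightarrow> (nat \<Rightarrow> 'a::comm_ring_1 oct) \<Rightarrow> (nat \<Rightarrow> 'a oct) \<Rightarrow> bool" where
  "same_G2_orbit n a b \<longleftrightarrow> (\<exists>g. is_G2 g \<and> (\<forall>i<n. g (a i) = b i))"

inductive_set alg_gen :: "nat \<Rightarrow> (nat \<Rightarrow> 'a::comm_ring_1 oct) \<Rightarrow> 'a oct set"
  for n :: nat and b :: "nat \<Rightarrow> 'a oct" where
  gen: "i < n \<Longrightarrow> b i \<in> alg_gen n b"
| zero: "0 \<in> alg_gen n b"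
| add: "x \<in> alg_gen n b \<Longrightarrow> y \<in> alg_gen n b \<Longrightarrow> x + y \<in> alg_gen n b"
| scale: "x \<in> alg_gen n b \<Longrightarrow> osc c x \<in> alg_gen n b"
| mult: "x \<in> alg_gen n b \<Longrightarrow> y \<in> alg_gen n b \<Longrightarrow> x * y \<in> alg_gen n b"

definition odim :: "'a::field oct set \<Rightarrow> nat" where
  "odim S = vector_space.dim osc S"

definition S2_agree :: "nat \<Rightarrow> (nat \<Rightarrow> 'a::comm_ring_1 oct) \<Rightarrow> (nat \<Rightarrow> 'a oct) \<Rightarrow> bool" where
  "S2_agree n a b \<longleftrightarrow>
     (\<forall>i<n. onorm (a i) = onorm (b i)) \<and> (\<forall>i<n. otr (a i) = otr (b i)) \<and>
     (\<forall>i j. i < j \<and> j < n \<longrightarrow> otr (a i * a j) = otr (b i * b j))"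

definition alg_closed_field :: "'a::field itself \<Rightarrow> bool" where
  "alg_closed_field _ \<longleftrightarrow> (\<forall>p :: 'a poly. degree p > 0 \<longrightarrow> (\<exists>x. poly p x = 0))"

end

theory Submission imports Defs begin

fun phiO :: "'a::comm_ring_1 \<Rightarrow> 'a oct \<Rightarrow> 'a oct" where
 "phiO t (Oct a (u1,u2,u3) (v1,v2,v3) b) = Oct (a+t*v1) (u1+t*(b-a)-t*t*v1, u2, u3) (v1, v2+t*u3, v3-t*u2) (b-t*v1)"
fun psiO :: "'a::comm_ring_1 \<Rightarrow> 'a oct \<Rightarrow> 'a oct" where
 "psiO s (Oct a (u1,u2,u3) (v1,v2,v3) b) = Oct (a-s*u1) (u1, u2-s*v3, u3+s*v2) (v1+s*(a-b)-s*s*u1, v2, v3) (b+s*u1)"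

lemma oct_cases8: obtains a u1 u2 u3 v1 v2 v3 b where "x = Oct a (u1,u2,u3) (v1,v2,v3) b"
  by (metis oct.exhaust prod_cases3)

lemma G2_comp: "is_G2 f \<Longrightarrow> is_G2 g \<Longrightarrow> is_G2 (f \<circ> g)"
  unfolding is_G2_def by (auto intro: bij_comp)

lemma G2_id: "is_G2 id"
  unfolding is_G2_def by auto

lemma phiO_G2: "is_G2 (phiO (t::'a::comm_ring_1))"
  unfolding is_G2_def
proof (intro conjI allI)
  have inv: "phiO (-t) (phiO t x) = x" for t :: 'a and x
    by (cases x rule: oct_cases8) (simp add: algebra_simps power2_eq_square)
  show "bij (phiO t)"
    by (rule o_bij[where g="phiO (-t)"]) (auto simp: fun_eq_iff inv[of t] inv[of "-t", simplified])
  fix x y :: "'a oct" and c :: 'a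
  show "phiO t (x + y) = phiO t x + phiO t y"
    by (cases x rule: oct_cases8; cases y rule: oct_cases8) (simp add: algebra_simps)
  show "phiO t (osc c x) = osc c (phiO t x)"
    by (cases x rule: oct_cases8) (simp add: algebra_simps sc3_def)
  show "phiO t (x * y) = phiO t x * phiO t y"
    by (cases x rule: oct_cases8; cases y rule: oct_cases8) (simp add: algebra_simps dot3_def cross3_def sc3_def add3_def)
qed

lemma psiO_G2: "is_G2 (psiO (t::'a::comm_ring_1))"
  unfolding is_G2_def
proof (intro conjI allI)
  have inv: "psiO (-t) (psiO t x) = x" for t :: 'a and x
    by (cases x rule: oct_cases8) (simp add: algebra_simps power2_eq_square)
  show "bij (psiO t)"
    by (rule o_bij[where g="psiO (-t)"]) (auto simp: fun_eq_iff inv[of t] inv[of "-t", simplified])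
  fix x y :: "'a oct" and c :: 'a
  show "psiO t (x + y) = psiO t x + psiO t y"
    by (cases x rule: oct_cases8; cases y rule: oct_cases8) (simp add: algebra_simps)
  show "psiO t (osc c x) = osc c (psiO t x)"
    by (cases x rule: oct_cases8) (simp add: algebra_simps sc3_def)
  show "psiO t (x * y) = psiO t x * psiO t y"
    by (cases x rule: oct_cases8; cases y rule: oct_cases8) (simp add: algebra_simps dot3_def cross3_def sc3_def add3_def)
qed


interpretation OV: vector_space "osc :: 'a::field \<Rightarrow> 'a oct \<Rightarrow> 'a oct"
proof
  fix a b :: 'a and x y :: "'a oct"
  show "osc a (x + y) = osc a x + osc a y"
    by (cases x rule: oct_cases8; cases y rule: oct_cases8) (simp add: algebra_simps sc3_def)
  show "osc (a + b) x = osc a x + osc b x"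
    by (cases x rule: oct_cases8) (simp add: algebra_simps sc3_def)
  show "osc a (osc b x) = osc (a * b) x"
    by (cases x rule: oct_cases8) (simp add: algebra_simps sc3_def)
  show "osc 1 x = x"
    by (cases x rule: oct_cases8) (simp add: sc3_def)
qed

definition EB :: "'a::field oct set" where
  "EB = {Oct 1 (0,0,0) (0,0,0) 0, Oct 0 (1,0,0) (0,0,0) 0, Oct 0 (0,1,0) (0,0,0) 0, Oct 0 (0,0,1) (0,0,0) 0,
         Oct 0 (0,0,0) (1,0,0) 0, Oct 0 (0,0,0) (0,1,0) 0, Oct 0 (0,0,0) (0,0,1) 0, Oct 0 (0,0,0) (0,0,0) 1}"

lemma EB_span: "(x::'a::field oct) \<in> OV.span EB"
proof (cases x rule: oct_cases8)
  case (1 a u1 u2 u3 v1 v2 v3 b)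
  have "x = osc a (Oct 1 (0,0,0) (0,0,0) 0) + osc u1 (Oct 0 (1,0,0) (0,0,0) 0) + osc u2 (Oct 0 (0,1,0) (0,0,0) 0)
     + osc u3 (Oct 0 (0,0,1) (0,0,0) 0) + osc v1 (Oct 0 (0,0,0) (1,0,0) 0) + osc v2 (Oct 0 (0,0,0) (0,1,0) 0)
     + osc v3 (Oct 0 (0,0,0) (0,0,1) 0) + osc b (Oct 0 (0,0,0) (0,0,0) 1)"
    using 1 by (simp add: sc3_def)
  also have "\<dots> \<in> OV.span EB"
    by (intro OV.span_add OV.span_scale OV.span_base) (auto simp: EB_def)
  finally show ?thesis .
qed

lemma dim1_mult:
  fixes S :: "'a::field oct set"
  assumes "OV.dim S \<le> 1" "x \<in> S" "x \<noteq> 0" "y \<in> S"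
  shows "\<exists>c. y = osc c x"
proof -
  obtain B where B: "B \<subseteq> S" "OV.independent B" "S \<subseteq> OV.span B" "card B = OV.dim S"
    by (rule OV.basis_exists)
  have "finite B"
    using OV.independent_span_bound[of EB B] B(2) EB_span by (auto simp: EB_def)
  have "B \<noteq> {}" using B(3) assms(2,3) OV.span_empty by auto
  then have "card B = 1" using \<open>finite B\<close> B(4) assms(1) by (metis One_nat_def card_0_eq le_Suc_eq le_zero_eq)
  then obtain w where w: "B = {w}" by (rule card_1_singletonE)
  obtain k where k: "x = osc k w" using B(3) assms(2) w OV.span_singleton by blast
  obtain m where m: "y = osc m w" using B(3) assms(4) w OV.span_singleton by blast
  have "k \<noteq> 0" using k assms(3) by auto
  then have "y = osc (m / k) x" using k m by simp
  then show ?thesis by blast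
qed


lemma otr_osc: "otr (osc c x) = c * otr x"
  by (cases x rule: oct_cases8) (simp add: sc3_def algebra_simps)
lemma onorm_osc: "onorm (osc c x) = c * c * onorm x"
  by (cases x rule: oct_cases8) (simp add: sc3_def dot3_def algebra_simps)
lemma osc_zero[simp]: "osc 0 x = 0"
  by (cases x rule: oct_cases8) (simp add: sc3_def zero_oct_def)
lemma otr0[simp]: "otr 0 = 0" by (simp add: zero_oct_def)
lemma onorm0[simp]: "onorm 0 = 0" by (simp add: zero_oct_def dot3_def)
lemma G2_zero: "is_G2 g \<Longrightarrow> g 0 = 0"
  unfolding is_G2_def by (metis add.right_neutral add_left_cancel)

theorem lemma7p6:
  fixes n :: nat and a b :: "nat \<Rightarrow> 'a::field oct"
  assumes "alg_closed_field TYPE('a)"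
    and "(2::'a) = 0"
    and "n \<ge> 1"
    and "a 0 \<in> {one_O, e1}"
    and "\<forall>i. 0 < i \<and> i < n \<longrightarrow> a i = 0"
    and "\<forall>i<n. b i \<in> quatM"
    and "odim (alg_gen n b) \<le> 1"
    and "S2_agree n a b"
  shows "same_G2_orbit n a b"
proof -
  have n0: "0 < n" using assms(3) by simp
  obtain \<alpha> \<beta> \<gamma> \<delta> where b0: "b 0 = Oct \<alpha> (\<gamma>,0,0) (\<delta>,0,0) \<beta>"
    using assms(6) n0 unfolding quatM_def by blast
  have b0in: "b 0 \<in> alg_gen n b" using n0 by (rule alg_gen.gen)
  have dim: "OV.dim (alg_gen n b) \<le> 1" using assms(7) by (simp add: odim_def)
  have nm0: "onorm (a 0) = onorm (b 0)" and tr0: "otr (a 0) = otr (b 0)"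
    using assms(8) n0 unfolding S2_agree_def by auto
  have nmi: "onorm (b i) = 0" "otr (b i) = 0" if "0 < i" "i < n" for i
    using assms(8) assms(5) that unfolding S2_agree_def by force+
  have m1: "-1 = (1::'a)" using assms(2) by (metis add_eq_0_iff2 one_add_one)
  have e1v: "e1 = (Oct 1 (0,0,0) (0,0,0) 0 :: 'a oct)" by (simp add: e1_def)
  have onev: "one_O = (Oct 1 (0,0,0) (0,0,0) 1 :: 'a oct)" by (simp add: one_O_def e1_def e2_def)
  have b0nz: "b 0 \<noteq> 0"
  proof
    assume "b 0 = 0"
    then show False using nm0 tr0 assms(4) by (auto simp: e1v onev dot3_def)
  qed
  have bmul: "\<exists>c. b i = osc c (b 0)" if "i < n" for i
    using dim1_mult[OF dim b0in b0nz alg_gen.gen[OF that]] by blast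
  show ?thesis
  proof (cases "a 0 = one_O")
    case True
    have N: "\<alpha> * \<beta> - \<gamma> * \<delta> = 1" using nm0 True b0 by (simp add: onev dot3_def)
    have T: "\<alpha> + \<beta> = 0" using tr0 True b0 assms(2) by (simp add: onev)
    have "b 0 * b 0 \<in> alg_gen n b" using b0in b0in by (rule alg_gen.mult)
    then obtain c where c: "b 0 * b 0 = osc c (b 0)" using dim1_mult[OF dim b0in b0nz] by blast
    have beta: "\<beta> = - \<alpha>" using T by (simp add: eq_neg_iff_add_eq_0 add.commute)
    have E1: "\<alpha> * \<alpha> + \<gamma> * \<delta> = c * \<alpha>" and E2: "\<alpha> * \<gamma> + \<beta> * \<gamma> = c * \<gamma>"
      and E3: "\<alpha> * \<delta> + \<beta> * \<delta> = c * \<delta>"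
      using c b0 by (simp_all add: dot3_def sc3_def add3_def cross3_def algebra_simps)
    have "\<alpha> * \<alpha> + \<gamma> * \<delta> = -(\<alpha> * \<beta> - \<gamma> * \<delta>)" using beta by (simp add: algebra_simps)
    then have "\<alpha> * \<alpha> + \<gamma> * \<delta> = -1" using N by simp
    then have "c * \<alpha> = -1" using E1 by simp
    then have c0: "c \<noteq> 0" by auto
    have "c * \<gamma> = 0" "c * \<delta> = 0" using E2 E3 beta by (simp_all add: algebra_simps)
    then have gd: "\<gamma> = 0" "\<delta> = 0" using c0 by auto
    then have "- (\<alpha> * \<alpha>) = 1" using N beta by simp
    then have "\<alpha> * \<alpha> = 1" using m1 by (metis minus_minus)
    then have "(\<alpha> - 1) * (\<alpha> - 1) = 0" using assms(2) m1
      by (simp add: algebra_simps)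
    then have a1: "\<alpha> = 1" by simp
    then have b1: "\<beta> = 1" using beta m1 by simp
    have B0: "b 0 = a 0" using b0 gd a1 b1 True by (simp add: onev)
    have "b i = a i" if "i < n" for i
    proof (cases "i = 0")
      case True then show ?thesis using B0 by simp
    next
      case False
      obtain k where k: "b i = osc k (b 0)" using bmul[OF \<open>i < n\<close>] by blast
      have "k * k = 0" using nmi(1)[of i] False that k B0 True onorm_osc[of k "b 0"]
        by (simp add: onev dot3_def sc3_def)
      then have "k = 0" by simp
      then show ?thesis using k assms(5) False that by simp
    qed
    then show ?thesis unfolding same_G2_orbit_def using G2_id by (intro exI[of _ id]) auto
  next
    case False
    then have ae: "a 0 = e1" using assms(4) by auto
    have N: "\<alpha> * \<beta> = \<gamma> * \<delta>" using nm0 ae b0 by (simp add: e1v dot3_def)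
    have T: "\<alpha> + \<beta> = 1" using tr0 ae b0 by (simp add: e1v)
    have bi0: "b i = 0" if "0 < i" "i < n" for i
    proof -
      obtain k where k: "b i = osc k (b 0)" using bmul[OF \<open>i < n\<close>] by blast
      have "k = 0" using nmi(2)[OF that] k otr_osc[of k "b 0"] tr0 ae by (simp add: e1v)
      then show ?thesis using k by simp
    qed
    obtain g where g: "is_G2 g" "g e1 = b 0"
    proof (cases "\<gamma> = 0")
      case False
      let ?g = "psiO (\<beta> / \<gamma>) \<circ> phiO (- \<gamma>)"
      have "?g e1 = b 0"
      proof -
        have "\<beta> / \<gamma> - \<beta> / \<gamma> * (\<beta> / \<gamma>) * \<gamma> = \<delta>"
        proof -
          have "\<beta> / \<gamma> - \<beta> / \<gamma> * (\<beta> / \<gamma>) * \<gamma> = \<beta> / \<gamma> * (1 - \<beta>)"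
            using False by (simp add: field_simps)
          also have "\<dots> = \<alpha> * \<beta> / \<gamma>" using T by (metis add_diff_cancel_right' mult.commute times_divide_eq_left)
          also have "\<dots> = \<delta>" using N False by simp
          finally show ?thesis .
        qed
        then show ?thesis using b0 T False by (simp add: e1v field_simps)
      qed
      then show ?thesis using that G2_comp[OF psiO_G2 phiO_G2] by blast
    next
      case True
      then have "\<alpha> * \<beta> = 0" using N by simp
      then consider "\<alpha> = 1" "\<beta> = 0" | "\<alpha> = 0" "\<beta> = 1" using T by auto
      then show ?thesis
      proof cases
        case 1
        have "psiO \<delta> e1 = b 0" using 1 True b0 by (simp add: e1v)
        then show ?thesis using that psiO_G2 by blast
      next
        case 2
        have "(psiO (1 - \<delta>) \<circ> phiO (-1) \<circ> psiO 1) e1 = b 0" using 2 True b0 by (simp add: e1v)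
        then show ?thesis using that G2_comp[OF G2_comp[OF psiO_G2 phiO_G2] psiO_G2] by blast
      qed
    qed
    have "g (a i) = b i" if "i < n" for i
    proof (cases "i = 0")
      case True then show ?thesis using g ae by simp
    next
      case False then show ?thesis using bi0 assms(5) that G2_zero[OF g(1)] by simp
    qed
    then show ?thesis unfolding same_G2_orbit_def using g(1) by blast
  qed
qed

end
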